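(* There is an absolute constant $C\ge0$ such that the following holds. Assume $\bar u\in\mathbb{R}^n_{>0}$, $f:[0,\bar u]\to\mathbb{R}$ is differentiable, nonnegative, DR-submodular with $L$-Lipschitz gradient, $\mathcal{P}\subseteq[0,\bar u]$ is nonempty compact convex down-closed with diameter $D$, and $x^*\in\arg\max_{x\in\mathcal{P}}f(x)$. Running the non-monotone Frank-Wolfe procedure (defined in the context) with step size $\gamma\in(0,1]$, for every $k=1,\dots,K$, $$f(x^{(k)})\ge t^{(k)}e^{-t^{(k)}}f(x^* )-\frac{LD^2}{2}k\gamma^2-C\gamma^2 f(x^* ).$$
   Context: Inequalities between vectors are componentwise. Down-closed: $x\in\mathcal{P}$, $0\le y\le x$ imply $y\in\mathcal{P}$; diameter $D=\max_{x,y\in\mathcal{P}}\|x-y\|$. DR-submodular: for all $a\le b$ in the domain, $i\in[n]$, $k\ge0$ with $a+ke_i,b+ke_i$ in the domain, $f(a+ke_i)-f(a)\ge f(b+ke_i)-f(b)$. $L$-Lipschitz gradient: $\|\nabla f(x)-\nabla f(y)\|\le L\|x-y\|$. Non-monotone Frank-Wolfe with step size $\gamma\in(0,1]$: $x^{(0)}=0$, $t^{(0)}=0$; while $t^{(k)}<1$: choose $v^{(k)}\in\arg\max\{\langle v,\nabla f(x^{(k)})\rangle: v\in\mathcal{P},\ v\le\bar u-x^{(k)}\}$, set $\gamma_k=\min\{\gamma,1-t^{(k)}\}$, $x^{(k+1)}=x^{(k)}+\gamma_k v^{(k)}$, $t^{(k+1)}=t^{(k)}+\gamma_k$. $K$ is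 the total number of iterations ($t^{(K)}=1$). *)

theory Defs
  imports "HOL-Analysis.Analysis"
begin

text \<open>Vectors of R^n are represented as functions nat => real that vanish at
  all coordinates i >= n.  This lets the dimension n be quantified inside the
  statement (needed because the constant C must be independent of n).
  The order on nat => real is the pointwise (componentwise) order of Main,
  and the topology is the product topology (Function_Topology), which agrees
  with the Euclidean topology on the finite-dimensional subspace R^n.\<close>

definition Rn :: "nat \<Rightarrow> (nat \<Rightarrow> real) set" where
  "Rn n = {x. \<forall>i\<ge>n. x i = 0}"

definition inner_n :: "nat \<Rightarrow> (nat \<Rightarrow> real) \<Rightarrow> (nat \<Rightarrow> real) \<Rightarrow> real" where
  "inner_n n x y = (\<Sum>i<n. x i * y i)"

definition norm_n :: "nat \<Rightarrow> (nat \<Rightarrow> real) \<Rightarrow> real" where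
  "norm_n n x = sqrt (\<Sum>i<n. (x i)\<^sup>2)"

definition vsub :: "(nat \<Rightarrow> real) \<Rightarrow> (nat \<Rightarrow> real) \<Rightarrow> (nat \<Rightarrow> real)" where
  "vsub x y = (\<lambda>i. x i - y i)"

definition vadd :: "(nat \<Rightarrow> real) \<Rightarrow> (nat \<Rightarrow> real) \<Rightarrow> (nat \<Rightarrow> real)" where
  "vadd x y = (\<lambda>i. x i + y i)"

definition vscale :: "real \<Rightarrow> (nat \<Rightarrow> real) \<Rightarrow> (nat \<Rightarrow> real)" where
  "vscale c x = (\<lambda>i. c * x i)"

definition unitv :: "nat \<Rightarrow> (nat \<Rightarrow> real)" where
  "unitv i = (\<lambda>j. if j = i then 1 else 0)"

definition box0 :: "(nat \<Rightarrow> real) \<Rightarrow> (nat \<Rightarrow> real) set" where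
  "box0 u = {x. (\<lambda>_. 0) \<le> x \<and> x \<le> u}"

definition convex_n :: "(nat \<Rightarrow> real) set \<Rightarrow> bool" where
  "convex_n S \<longleftrightarrow> (\<forall>x\<in>S. \<forall>y\<in>S. \<forall>a::real. 0 \<le> a \<and> a \<le> 1 \<longrightarrow>
      (\<lambda>i. a * x i + (1 - a) * y i) \<in> S)"

definition down_closed :: "(nat \<Rightarrow> real) set \<Rightarrow> bool" where
  "down_closed S \<longleftrightarrow> (\<forall>x\<in>S. \<forall>y. (\<lambda>_. 0) \<le> y \<and> y \<le> x \<longrightarrow> y \<in> S)"

definition diam_n :: "nat \<Rightarrow> (nat \<Rightarrow> real) set \<Rightarrow> real" where
  "diam_n n S = Sup {norm_n n (vsub x y) | x y. x \<in> S \<and> y \<in> S}"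

definition has_gradient_on :: "nat \<Rightarrow> ((nat \<Rightarrow> real) \<Rightarrow> real) \<Rightarrow> ((nat \<Rightarrow> real) \<Rightarrow> (nat \<Rightarrow> real))
     \<Rightarrow> (nat \<Rightarrow> real) set \<Rightarrow> bool" where
  "has_gradient_on n f g S \<longleftrightarrow> (\<forall>x\<in>S. g x \<in> Rn n \<and> (\<forall>e>0. \<exists>d>0. \<forall>y\<in>S.
      norm_n n (vsub y x) < d \<longrightarrow>
      \<bar>f y - f x - inner_n n (g x) (vsub y x)\<bar> \<le> e * norm_n n (vsub y x)))"

definition dr_submodular_on :: "nat \<Rightarrow> ((nat \<Rightarrow> real) \<Rightarrow> real) \<Rightarrow> (nat \<Rightarrow> real) set \<Rightarrow> bool" where
  "dr_submodular_on n f S \<longleftrightarrow> (\<forall>a\<in>S. \<forall>b\<in>S. \<forall>i<n. \<forall>k::real.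
      a \<le> b \<and> 0 \<le> k \<and> vadd a (vscale k (unitv i)) \<in> S \<and> vadd b (vscale k (unitv i)) \<in> S \<longrightarrow>
      f (vadd a (vscale k (unitv i))) - f a \<ge> f (vadd b (vscale k (unitv i))) - f b)"

definition nmfw_run :: "nat \<Rightarrow> ((nat \<Rightarrow> real) \<Rightarrow> (nat \<Rightarrow> real)) \<Rightarrow> (nat \<Rightarrow> real) set
    \<Rightarrow> (nat \<Rightarrow> real) \<Rightarrow> real \<Rightarrow> nat \<Rightarrow> (nat \<Rightarrow> nat \<Rightarrow> real) \<Rightarrow> (nat \<Rightarrow> real)
    \<Rightarrow> (nat \<Rightarrow> nat \<Rightarrow> real) \<Rightarrow> bool" where
  "nmfw_run n g P u \<gamma> K x t v \<longleftrightarrow>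
     x 0 = (\<lambda>_. 0) \<and> t 0 = 0 \<and> \<not> (t K < 1) \<and>
     (\<forall>k<K. t k < 1 \<and>
        v k \<in> P \<and> v k \<le> vsub u (x k) \<and>
        (\<forall>w\<in>P. w \<le> vsub u (x k) \<longrightarrow> inner_n n w (g (x k)) \<le> inner_n n (v k) (g (x k))) \<and>
        x (Suc k) = vadd (x k) (vscale (min \<gamma> (1 - t k)) (v k)) \<and>
        t (Suc k) = t k + min \<gamma> (1 - t k))"

end

theory Submission
  imports Defs
begin


lemma my_mvt:
  fixes \<phi> :: "real \<Rightarrow> real"
  assumes "a < b" and "\<And>s. s \<in> {a..b} \<Longrightarrow> (\<phi> has_real_derivative \<phi>' s) (at s within {a..b})"
  shows "\<exists>\<xi>\<in>{a<..<b}. \<phi> b - \<phi> a = \<phi>' \<xi> * (b - a)"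
proof -
  have "\<exists>x\<in>{a<..<b}. \<phi> b - \<phi> a = (*) (\<phi>' x) (b - a)"
    apply (rule mvt_simple[OF assms(1)])
    using assms(2) unfolding has_field_derivative_def by simp
  then show ?thesis by simp
qed

lemma nm_nonneg: "norm_n n x \<ge> 0" unfolding norm_n_def by (simp add: sum_nonneg)

lemma nm_scale: "norm_n n (\<lambda>i. c * d i) = \<bar>c\<bar> * norm_n n d"
proof -
  have "(\<Sum>i<n. (c * d i)\<^sup>2) = c\<^sup>2 * (\<Sum>i<n. (d i)\<^sup>2)"
    by (simp add: sum_distrib_left power_mult_distrib)
  then show ?thesis unfolding norm_n_def by (simp add: real_sqrt_mult)
qed

lemma ip_scale: "inner_n n G (\<lambda>i. c * d i) = c * inner_n n G d"
  unfolding inner_n_def by (simp add: sum_distrib_left algebra_simps)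

lemma coord_le_nm: "i < n \<Longrightarrow> \<bar>x i\<bar> \<le> norm_n n x"
proof -
  assume "i < n"
  then have "(x i)\<^sup>2 \<le> (\<Sum>j<n. (x j)\<^sup>2)"
    by (intro member_le_sum) auto
  then have "sqrt ((x i)\<^sup>2) \<le> norm_n n x" unfolding norm_n_def using real_sqrt_le_mono by blast
  then show ?thesis by simp
qed

lemma cs: "\<bar>inner_n n a b\<bar> \<le> norm_n n a * norm_n n b"
proof -
  have "\<bar>inner_n n a b\<bar> \<le> (\<Sum>i<n. \<bar>a i * b i\<bar>)"
    unfolding inner_n_def by (rule sum_abs)
  also have "\<dots> = (\<Sum>i<n. \<bar>a i\<bar> * \<bar>b i\<bar>)" by (simp add: abs_mult)
  also have "\<dots> \<le> L2_set a {..<n} * L2_set b {..<n}" by (rule L2_set_mult_ineq)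
  finally show ?thesis unfolding norm_n_def L2_set_def .
qed

lemma grad_at:
  assumes "has_gradient_on n f g B" and "x \<in> B" and "e > 0"
  shows "\<exists>d>0. \<forall>y\<in>B. norm_n n (vsub y x) < d \<longrightarrow>
      \<bar>f y - f x - inner_n n (g x) (vsub y x)\<bar> \<le> e * norm_n n (vsub y x)"
proof -
  have "\<forall>x\<in>B. g x \<in> Rn n \<and> (\<forall>e>0. \<exists>d>0. \<forall>y\<in>B.
      norm_n n (vsub y x) < d \<longrightarrow>
      \<bar>f y - f x - inner_n n (g x) (vsub y x)\<bar> \<le> e * norm_n n (vsub y x))"
    using assms(1) unfolding has_gradient_on_def .
  then have "\<forall>e>0. \<exists>d>0. \<forall>y\<in>B.
      norm_n n (vsub y x) < d \<longrightarrow>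
      \<bar>f y - f x - inner_n n (g x) (vsub y x)\<bar> \<le> e * norm_n n (vsub y x)"
    using assms(2) by simp
  then show ?thesis using assms(3) by simp
qed

lemma seg_deriv:
  assumes hg: "has_gradient_on n f g B"
    and seg: "\<And>s. s \<in> S \<Longrightarrow> (\<lambda>i. y i + s * d i) \<in> B" and sS: "s \<in> S"
  shows "((\<lambda>s. f (\<lambda>i. y i + s * d i)) has_real_derivative inner_n n (g (\<lambda>i. y i + s * d i)) d) (at s within S)"
proof -
  define p where "p = (\<lambda>s. (\<lambda>i. y i + s * d i))"
  define G where "G = g (p s)"
  define N where "N = norm_n n d"
  have N0: "N \<ge> 0" unfolding N_def by (rule nm_nonneg)
  have vs: "vsub (p s') (p s) = (\<lambda>i. (s' - s) * d i)" for s'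
    unfolding vsub_def p_def by (auto simp: algebra_simps)
  have psB: "p s \<in> B" using seg[OF sS] unfolding p_def .
  have grad: "\<forall>e>0. \<exists>\<delta>>0. \<forall>z\<in>B. norm_n n (vsub z (p s)) < \<delta> \<longrightarrow>
      \<bar>f z - f (p s) - inner_n n G (vsub z (p s))\<bar> \<le> e * norm_n n (vsub z (p s))"
    unfolding G_def using grad_at[OF hg psB] by blast
  have "((\<lambda>s'. (f (p s') - f (p s)) / (s' - s)) \<longlongrightarrow> inner_n n G d) (at s within S)"
    unfolding tendsto_iff eventually_at
  proof (intro allI impI)
    fix e :: real assume e: "e > 0"
    define e' where "e' = e / (N + 1)"
    have e': "e' > 0" using e N0 unfolding e'_def by simp
    obtain \<delta> where \<delta>: "\<delta> > 0" and H: "\<forall>z\<in>B. norm_n n (vsub z (p s)) < \<delta> \<longrightarrow>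
      \<bar>f z - f (p s) - inner_n n G (vsub z (p s))\<bar> \<le> e' * norm_n n (vsub z (p s))"
      using grad e' by blast
    show "\<exists>d'>0. \<forall>s'\<in>S. s' \<noteq> s \<and> dist s' s < d' \<longrightarrow>
        dist ((f (p s') - f (p s)) / (s' - s)) (inner_n n G d) < e"
    proof (intro exI[of _ "\<delta> / (N + 1)"] conjI ballI impI)
      show "\<delta> / (N + 1) > 0" using \<delta> N0 by simp
      fix s' assume s': "s' \<in> S" "s' \<noteq> s \<and> dist s' s < \<delta> / (N + 1)"
      define h where "h = s' - s"
      have h0: "\<bar>h\<bar> > 0" using s' unfolding h_def by simp
      have hlt: "\<bar>h\<bar> * (N + 1) < \<delta>" using s' N0 unfolding h_def dist_real_def
        by (simp add: pos_less_divide_eq)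
      have nmv: "norm_n n (vsub (p s') (p s)) = \<bar>h\<bar> * N"
        unfolding vs nm_scale h_def N_def ..
      have "\<bar>h\<bar> * N \<le> \<bar>h\<bar> * (N + 1)" using h0 by (intro mult_left_mono) auto
      then have "\<bar>h\<bar> * N < \<delta>" using hlt by linarith
      moreover have "p s' \<in> B" using seg[OF s'(1)] unfolding p_def .
      ultimately have "\<bar>f (p s') - f (p s) - inner_n n G (vsub (p s') (p s))\<bar> \<le> e' * (\<bar>h\<bar> * N)"
        using H nmv by metis
      then have A: "\<bar>f (p s') - f (p s) - h * inner_n n G d\<bar> \<le> e' * (\<bar>h\<bar> * N)"
        unfolding vs ip_scale h_def .
      have "(f (p s') - f (p s)) / (s' - s) - inner_n n G d = (f (p s') - f (p s) - h * inner_n n G d) / h"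
        using h0 unfolding h_def by (simp add: field_simps)
      then have "dist ((f (p s') - f (p s)) / (s' - s)) (inner_n n G d)
          = \<bar>f (p s') - f (p s) - h * inner_n n G d\<bar> / \<bar>h\<bar>"
        by (simp add: dist_real_def)
      also have "\<dots> \<le> e' * N" using A h0 by (simp only: pos_divide_le_eq[OF h0]) (simp add: algebra_simps)
      also have "\<dots> < e" unfolding e'_def using e N0 by (simp add: field_simps)
      finally show "dist ((f (p s') - f (p s)) / (s' - s)) (inner_n n G d) < e" .
    qed
  qed
  then show ?thesis unfolding has_field_derivative_iff p_def G_def by simp
qed


lemma nm_unit: "i < n \<Longrightarrow> norm_n n (vscale k (unitv i)) = \<bar>k\<bar>"
proof -
  assume i: "i < n"
  have "(\<Sum>j<n. (vscale k (unitv i) j)\<^sup>2) = (\<Sum>j<n. (if j = i then k\<^sup>2 else 0))"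
    by (rule sum.cong) (auto simp: vscale_def unitv_def)
  also have "\<dots> = k\<^sup>2" using i by (simp add: sum.delta)
  finally show ?thesis unfolding norm_n_def by simp
qed

lemma ip_unit: "i < n \<Longrightarrow> inner_n n G (vscale k (unitv i)) = k * G i"
proof -
  assume i: "i < n"
  have "(\<Sum>j<n. G j * vscale k (unitv i) j) = (\<Sum>j<n. (if j = i then k * G i else 0))"
    by (rule sum.cong) (auto simp: vscale_def unitv_def)
  also have "\<dots> = k * G i" using i by (simp add: sum.delta)
  finally show ?thesis unfolding inner_n_def by simp
qed

lemma box_iff: "x \<in> box0 u \<longleftrightarrow> (\<forall>i. 0 \<le> x i \<and> x i \<le> u i)"
  unfolding box0_def le_fun_def by auto

lemma grad_antitone_i:
  assumes hg: "has_gradient_on n f g (box0 u)" and dr: "dr_submodular_on n f (box0 u)"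
    and a: "a \<in> box0 u" and b: "b \<in> box0 u" and ab: "a \<le> b" and i: "i < n" and bu: "b i < u i"
  shows "g b i \<le> g a i"
proof (rule ccontr)
  assume "\<not> g b i \<le> g a i"
  define \<delta> where "\<delta> = g b i - g a i"
  have d0: "\<delta> > 0" using \<open>\<not> g b i \<le> g a i\<close> unfolding \<delta>_def by simp
  obtain ra where ra: "ra > 0" and Ha: "\<forall>z\<in>box0 u. norm_n n (vsub z a) < ra \<longrightarrow>
      \<bar>f z - f a - inner_n n (g a) (vsub z a)\<bar> \<le> \<delta>/4 * norm_n n (vsub z a)"
    using grad_at[OF hg a, of "\<delta>/4"] d0 by auto
  obtain rb where rb: "rb > 0" and Hb: "\<forall>z\<in>box0 u. norm_n n (vsub z b) < rb \<longrightarrow>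
      \<bar>f z - f b - inner_n n (g b) (vsub z b)\<bar> \<le> \<delta>/4 * norm_n n (vsub z b)"
    using grad_at[OF hg b, of "\<delta>/4"] d0 by auto
  define k where "k = min (min ra rb / 2) (u i - b i)"
  have k0: "k > 0" using ra rb bu unfolding k_def by simp
  have kra: "k < ra" and krb: "k < rb" and kb: "b i + k \<le> u i" using ra rb unfolding k_def by auto
  define a' where "a' = vadd a (vscale k (unitv i))"
  define b' where "b' = vadd b (vscale k (unitv i))"
  have abi: "a i \<le> b i" using ab by (simp add: le_fun_def)
  have a'B: "a' \<in> box0 u" using a kb abi k0 unfolding a'_def box_iff
    by (auto simp: vadd_def vscale_def unitv_def)
  have b'B: "b' \<in> box0 u" using b kb k0 unfolding b'_def box_iff
    by (auto simp: vadd_def vscale_def unitv_def)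
  have va: "vsub a' a = vscale k (unitv i)" unfolding a'_def by (auto simp: vsub_def vadd_def)
  have vb: "vsub b' b = vscale k (unitv i)" unfolding b'_def by (auto simp: vsub_def vadd_def)
  have nk: "norm_n n (vscale k (unitv i)) = k" using nm_unit[OF i] k0 by simp
  have "\<bar>f a' - f a - inner_n n (g a) (vsub a' a)\<bar> \<le> \<delta>/4 * norm_n n (vsub a' a)"
    using Ha[rule_format, OF a'B] va nk kra by simp
  then have A: "\<bar>f a' - f a - k * g a i\<bar> \<le> \<delta>/4 * k"
    unfolding va nk ip_unit[OF i] .
  have "\<bar>f b' - f b - inner_n n (g b) (vsub b' b)\<bar> \<le> \<delta>/4 * norm_n n (vsub b' b)"
    using Hb[rule_format, OF b'B] vb nk krb by simp
  then have Bq: "\<bar>f b' - f b - k * g b i\<bar> \<le> \<delta>/4 * k"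
    unfolding vb nk ip_unit[OF i] .
  have DR: "f a' - f a \<ge> f b' - f b"
    using dr a b ab i k0 a'B b'B unfolding dr_submodular_on_def a'_def b'_def by auto
  have "k * g b i - k * g a i = k * \<delta>" unfolding \<delta>_def by (simp add: algebra_simps)
  moreover have "k * \<delta> > 0" using k0 d0 by simp
  moreover have "\<delta>/4 * k = (k * \<delta>) / 4" by simp
  ultimately show False using A Bq DR by linarith
qed

lemma grad_antitone:
  assumes hg: "has_gradient_on n f g (box0 u)" and dr: "dr_submodular_on n f (box0 u)"
    and lip: "\<forall>y\<in>box0 u. \<forall>z\<in>box0 u. norm_n n (vsub (g y) (g z)) \<le> L * norm_n n (vsub y z)"
    and upos: "\<forall>i<n. u i > 0"
    and a: "a \<in> box0 u" and b: "b \<in> box0 u" and ab: "a \<le> b" and i: "i < n"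
  shows "g b i \<le> g a i"
proof (rule ccontr)
  assume "\<not> g b i \<le> g a i"
  define \<delta> where "\<delta> = g b i - g a i"
  have d0: "\<delta> > 0" using \<open>\<not> g b i \<le> g a i\<close> unfolding \<delta>_def by simp
  have ui: "u i > 0" using upos i by simp
  define M where "M = 4 * (\<bar>L\<bar> + 1) * (u i + 1)"
  have M0: "M > 0" unfolding M_def using ui by (simp add: add_pos_nonneg)
  define \<epsilon> where "\<epsilon> = min 1 (\<delta> / M)"
  have e0: "\<epsilon> > 0" and e1: "\<epsilon> \<le> 1" unfolding \<epsilon>_def using d0 M0 by auto
  have eM: "\<epsilon> * M \<le> \<delta>" unfolding \<epsilon>_def using M0 d0 by (simp add: min_def pos_le_divide_eq)
  have ai: "0 \<le> a i" "a i \<le> u i" and bi: "0 \<le> b i" "b i \<le> u i" using a b box_iff by auto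
  have abi: "a i \<le> b i" using ab by (simp add: le_fun_def)
  define a' where "a' = a(i := (1 - \<epsilon>) * a i)"
  define b' where "b' = b(i := (1 - \<epsilon>) * b i)"
  have "\<epsilon> * a i \<ge> 0" "\<epsilon> * b i \<ge> 0" using e0 ai bi by auto
  then have m1: "(1 - \<epsilon>) * a i \<le> a i" "(1 - \<epsilon>) * b i \<le> b i" "0 \<le> (1 - \<epsilon>) * a i" "0 \<le> (1 - \<epsilon>) * b i"
    using e0 e1 ai bi mult_left_le_one_le[of "a i" \<epsilon>] mult_left_le_one_le[of "b i" \<epsilon>] by (auto simp: algebra_simps)
  have "(1 - \<epsilon>) * a i \<le> u i" "(1 - \<epsilon>) * b i \<le> u i" using m1 ai bi by linarith+
  then have a'B: "a' \<in> box0 u" and b'B: "b' \<in> box0 u"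
    using a b m1 unfolding a'_def b'_def box_iff by auto
  have a'b': "a' \<le> b'" using ab abi e1 unfolding a'_def b'_def le_fun_def
    by (auto intro: mult_left_mono)
  have b'u: "b' i < u i"
  proof (cases "b i = 0")
    case True then show ?thesis using ui unfolding b'_def by simp
  next
    case False then have "b i > 0" using bi by simp
    then have "(1 - \<epsilon>) * b i < b i" using e0 by (simp add: algebra_simps)
    then show ?thesis using bi unfolding b'_def by simp
  qed
  have G: "g b' i \<le> g a' i" by (rule grad_antitone_i[OF hg dr a'B b'B a'b' i b'u])
  have bound: "\<bar>g c' i - g c i\<bar> \<le> \<delta> / 4"
    if c: "c \<in> box0 u" and c'B: "c' \<in> box0 u" and c': "c' = c(i := (1 - \<epsilon>) * c i)" for c c'
  proof -
    have ci: "0 \<le> c i" "c i \<le> u i" using c box_iff by auto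
    have vs: "vsub c' c = vscale (- (\<epsilon> * c i)) (unitv i)"
      unfolding c' by (auto simp: vsub_def vscale_def unitv_def algebra_simps)
    have nc: "norm_n n (vsub c' c) = \<epsilon> * c i" unfolding vs nm_unit[OF i] using e0 ci by simp
    have "\<bar>g c' i - g c i\<bar> \<le> norm_n n (vsub (g c') (g c))"
      using coord_le_nm[OF i, of "vsub (g c') (g c)"] by (simp add: vsub_def)
    also have "\<dots> \<le> L * (\<epsilon> * c i)" using lip[rule_format, OF c'B c] nc by simp
    also have "\<dots> \<le> \<bar>L\<bar> * (\<epsilon> * u i)"
      using e0 ci by (intro mult_mono) (auto simp: abs_ge_self mult_left_mono)
    also have "\<dots> \<le> (\<bar>L\<bar> + 1) * (\<epsilon> * (u i + 1))"
      using e0 ui by (intro mult_mono) auto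
    also have "\<dots> = \<epsilon> * M / 4" unfolding M_def by (simp add: algebra_simps)
    also have "\<dots> \<le> \<delta> / 4" using eM by simp
    finally show ?thesis .
  qed
  have "\<bar>g a' i - g a i\<bar> \<le> \<delta> / 4" using bound[OF a a'B] a'_def by simp
  moreover have "\<bar>g b' i - g b i\<bar> \<le> \<delta> / 4" using bound[OF b b'B] b'_def by simp
  ultimately show False using G d0 \<delta>_def unfolding abs_le_iff by (elim conjE) linarith
qed



lemma seg_in:
  assumes y: "y \<in> box0 u" and yd: "(\<lambda>i. y i + d i) \<in> box0 u" and d: "\<forall>i. 0 \<le> d i"
    and s: "0 \<le> s" "s \<le> 1"
  shows "(\<lambda>i. y i + s * d i) \<in> box0 u"
proof -
  have "0 \<le> s * d i" "s * d i \<le> d i" for i using d s mult_left_le_one_le[of "d i" s] by auto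
  then show ?thesis using y yd unfolding box_iff by (metis add_increasing2 add_left_mono order_trans)
qed

context
  fixes n u f g L
  assumes hg: "has_gradient_on n f g (box0 u)" and dr: "dr_submodular_on n f (box0 u)"
    and lip: "\<forall>y\<in>box0 u. \<forall>z\<in>box0 u. norm_n n (vsub (g y) (g z)) \<le> L * norm_n n (vsub y z)"
    and upos: "\<forall>i<n. u i > 0" and fnn: "\<forall>y\<in>box0 u. f y \<ge> 0"
begin

lemma ip_anti:
  assumes "y1 \<in> box0 u" "y2 \<in> box0 u" "y1 \<le> y2" "\<forall>i. 0 \<le> d i"
  shows "inner_n n (g y2) d \<le> inner_n n (g y1) d"
  unfolding inner_n_def
proof (rule sum_mono)
  fix i assume "i \<in> {..<n}"
  then have "g y2 i \<le> g y1 i" using grad_antitone[OF hg dr lip upos assms(1-3)] by simp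
  then show "g y2 i * d i \<le> g y1 i * d i" using assms(4) by (simp add: mult_right_mono)
qed

lemma seg_der01:
  assumes y: "y \<in> box0 u" and yd: "(\<lambda>i. y i + d i) \<in> box0 u" and d: "\<forall>i. 0 \<le> d i"
    and s: "s \<in> {0..1}"
  shows "((\<lambda>s. f (\<lambda>i. y i + s * d i)) has_real_derivative inner_n n (g (\<lambda>i. y i + s * d i)) d) (at s within {0..1})"
  by (rule seg_deriv[OF hg _ s]) (use seg_in[OF y yd d] in auto)

lemma grad_upper:
  assumes y: "y \<in> box0 u" and yd: "(\<lambda>i. y i + d i) \<in> box0 u" and d: "\<forall>i. 0 \<le> d i"
  shows "f (\<lambda>i. y i + d i) - f y \<le> inner_n n (g y) d"
proof -
  define p where "p = (\<lambda>s. (\<lambda>i. y i + s * d i))"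
  obtain \<xi> where \<xi>: "\<xi> \<in> {0<..<1}" and E: "f (p 1) - f (p 0) = inner_n n (g (p \<xi>)) d * (1 - 0)"
    using my_mvt[of 0 1 "\<lambda>s. f (p s)" "\<lambda>s. inner_n n (g (p s)) d"] seg_der01[OF y yd d]
    unfolding p_def by auto
  have p1: "p 1 = (\<lambda>i. y i + d i)" and p0: "p 0 = y" unfolding p_def by auto
  have pB: "p \<xi> \<in> box0 u" using seg_in[OF y yd d] \<xi> unfolding p_def by auto
  have "y \<le> p \<xi>" using \<xi> d unfolding p_def le_fun_def by auto
  then have "inner_n n (g (p \<xi>)) d \<le> inner_n n (g y) d" using ip_anti[OF y pB _ d] by simp
  then show ?thesis using E p1 p0 by simp
qed

lemma chord:
  assumes z: "z \<in> box0 u" and y: "y \<in> box0 u" and c: "0 \<le> c" "c \<le> 1"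
    and yc: "\<forall>i. y i \<le> (1 - c) * u i"
  shows "c * f z \<le> f (\<lambda>i. max (z i) (y i))"
proof -
  have zi: "0 \<le> z i" "z i \<le> u i" and yi: "0 \<le> y i" "y i \<le> u i" for i
    using z y box_iff by auto
  have mB: "(\<lambda>i. max (z i) (y i)) \<in> box0 u" unfolding box_iff using zi yi by (simp add: le_max_iff_disj)
  consider "c = 0" | "c = 1" | "0 < c \<and> c < 1" using c by linarith
  then show ?thesis
  proof cases
    case 1 then show ?thesis using fnn mB by simp
  next
    case 2
    then have yle: "y i \<le> 0" for i using yc[rule_format, of i] by simp
    have "max (z i) (y i) = z i" for i using yle[of i] zi(1)[of i] by simp
    then have "(\<lambda>i. max (z i) (y i)) = z" by auto
    then show ?thesis using 2 by simp
  next
    case 3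
    define \<theta> where "\<theta> = 1 - c"
    have th: "0 < \<theta>" "\<theta> < 1" using 3 unfolding \<theta>_def by auto
    define d where "d = (\<lambda>i. (max (z i) (y i) - z i) / \<theta>)"
    have d0: "\<forall>i. 0 \<le> d i" unfolding d_def using th by auto
    have zdB: "(\<lambda>i. z i + d i) \<in> box0 u" unfolding box_iff
    proof
      fix i
      have "z i + d i \<le> u i"
      proof (cases "y i \<le> z i")
        case True then show ?thesis using zi unfolding d_def by simp
      next
        case False
        have "0 \<le> c * z i" using 3 zi(1)[of i] by simp
        then have "y i - z i \<le> \<theta> * (u i - z i)"
          using yc[rule_format, of i] unfolding \<theta>_def by (simp add: algebra_simps)
        then have "(y i - z i) / \<theta> \<le> u i - z i" using th by (simp add: pos_divide_le_eq mult.commute)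
        then show ?thesis using False unfolding d_def by simp
      qed
      then show "0 \<le> z i + d i \<and> z i + d i \<le> u i" using zi d0 by (meson add_nonneg_nonneg)
    qed
    define p where "p = (\<lambda>s. (\<lambda>i. z i + s * d i))"
    define \<phi> where "\<phi> = (\<lambda>s. f (p s))"
    define \<phi>' where "\<phi>' = (\<lambda>s. inner_n n (g (p s)) d)"
    have der: "(\<phi> has_real_derivative \<phi>' s) (at s within {0..1})" if "s \<in> {0..1}" for s
      using seg_der01[OF z zdB d0 that] unfolding \<phi>_def \<phi>'_def p_def .
    have derA: "(\<phi> has_real_derivative \<phi>' s) (at s within {0..\<theta>})" if "s \<in> {0..\<theta>}" for s
      by (rule DERIV_subset[OF der]) (use that th in auto)
    have derB: "(\<phi> has_real_derivative \<phi>' s) (at s within {\<theta>..1})" if "s \<in> {\<theta>..1}" for s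
      by (rule DERIV_subset[OF der]) (use that th in auto)
    obtain \<xi>1 where x1: "\<xi>1 \<in> {0<..<\<theta>}" and E1: "\<phi> \<theta> - \<phi> 0 = \<phi>' \<xi>1 * (\<theta> - 0)"
      using my_mvt[of 0 \<theta> \<phi> \<phi>', OF th(1) derA] by blast
    obtain \<xi>2 where x2: "\<xi>2 \<in> {\<theta><..<1}" and E2: "\<phi> 1 - \<phi> \<theta> = \<phi>' \<xi>2 * (1 - \<theta>)"
      using my_mvt[of \<theta> 1 \<phi> \<phi>', OF th(2) derB] by blast
    have pB: "p s \<in> box0 u" if "0 \<le> s" "s \<le> 1" for s
      using seg_in[OF z zdB d0 that] unfolding p_def .
    have "p \<xi>1 \<le> p \<xi>2" unfolding p_def le_fun_def using x1 x2 d0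
      by (auto intro!: mult_right_mono)
    then have YX: "\<phi>' \<xi>2 \<le> \<phi>' \<xi>1" unfolding \<phi>'_def
      using ip_anti[OF pB pB _ d0, of \<xi>1 \<xi>2] x1 x2 th by auto
    have A1: "\<phi> 1 \<ge> 0" unfolding \<phi>_def using pB[of 1] fnn by auto
    have pth: "p \<theta> = (\<lambda>i. max (z i) (y i))" unfolding p_def d_def using th by auto
    have p0: "p 0 = z" unfolding p_def by auto
    have "\<phi>' \<xi>2 * (1 - \<theta>) \<le> \<phi>' \<xi>1 * (1 - \<theta>)" using YX th by (intro mult_right_mono) auto
    moreover have "\<phi>' \<xi>1 * \<theta> + \<phi>' \<xi>1 * (1 - \<theta>) = \<phi>' \<xi>1" by (simp add: algebra_simps)
    ultimately have "\<phi> 0 + \<phi>' \<xi>1 \<ge> 0" using E1 E2 A1 by simp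
    then have "\<theta> * (\<phi> 0 + \<phi>' \<xi>1) \<ge> 0" using th by simp
    then have "(1 - \<theta>) * \<phi> 0 \<le> \<phi> \<theta>" using E1 by (simp add: algebra_simps)
    then have "(1 - \<theta>) * f z \<le> f (\<lambda>i. max (z i) (y i))" unfolding \<phi>_def pth p0 .
    then show ?thesis unfolding \<theta>_def by simp
  qed
qed

lemma descent:
  assumes y: "y \<in> box0 u" and yd: "(\<lambda>i. y i + d i) \<in> box0 u" and d: "\<forall>i. 0 \<le> d i"
  shows "f (\<lambda>i. y i + d i) \<ge> f y + inner_n n (g y) d - L * (norm_n n d)\<^sup>2 / 2"
proof -
  define p where "p = (\<lambda>s. (\<lambda>i. y i + s * d i))"
  define c where "c = inner_n n (g y) d"
  define N where "N = norm_n n d"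
  define h where "h = (\<lambda>s. f (p s) - s * c + L * s\<^sup>2 * N\<^sup>2 / 2)"
  define h' where "h' = (\<lambda>s. inner_n n (g (p s)) d - c + L * s * N\<^sup>2)"
  have der: "(h has_real_derivative h' s) (at s within {0..1})" if "s \<in> {0..1}" for s
  proof -
    have D1: "((\<lambda>s. f (p s)) has_real_derivative inner_n n (g (p s)) d) (at s within {0..1})"
      using seg_der01[OF y yd d that] unfolding p_def .
    show ?thesis unfolding h_def h'_def
      by (rule derivative_eq_intros D1 | simp)+
  qed
  obtain \<xi> where \<xi>: "\<xi> \<in> {0<..<1}" and E: "h 1 - h 0 = h' \<xi> * (1 - 0)"
    using my_mvt[of 0 1 h h'] der by auto
  have pB: "p \<xi> \<in> box0 u" using seg_in[OF y yd d] \<xi> unfolding p_def by auto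
  have vs: "vsub (p \<xi>) y = (\<lambda>i. \<xi> * d i)" unfolding p_def vsub_def by auto
  have nv: "norm_n n (vsub (p \<xi>) y) = \<xi> * N" unfolding vs nm_scale N_def using \<xi> by simp
  have N0: "N \<ge> 0" unfolding N_def by (rule nm_nonneg)
  have lin: "inner_n n (g (p \<xi>)) d - c = inner_n n (vsub (g (p \<xi>)) (g y)) d"
    unfolding c_def inner_n_def vsub_def by (simp add: sum_subtractf algebra_simps)
  have "- inner_n n (vsub (g (p \<xi>)) (g y)) d \<le> norm_n n (vsub (g (p \<xi>)) (g y)) * N"
    using cs[of n "vsub (g (p \<xi>)) (g y)" d] unfolding N_def by linarith
  also have "\<dots> \<le> L * (\<xi> * N) * N"
    using lip[rule_format, OF pB y] nv N0 by (simp add: mult_right_mono)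
  finally have "h' \<xi> \<ge> 0" unfolding h'_def lin by (simp add: power2_eq_square algebra_simps)
  then have "h 1 \<ge> h 0" using E by simp
  moreover have "p 1 = (\<lambda>i. y i + d i)" "p 0 = y" unfolding p_def by auto
  ultimately show ?thesis unfolding h_def c_def N_def by simp
qed

end



lemma exp_bound_1g:
  fixes \<gamma> :: real assumes "0 \<le> \<gamma>" "\<gamma> < 1"
  shows "exp (- (\<gamma> / (1 - \<gamma>))) \<le> 1 - \<gamma>"
proof -
  have "1 + \<gamma> / (1 - \<gamma>) \<le> exp (\<gamma> / (1 - \<gamma>))" by (rule exp_ge_add_one_self)
  moreover have "1 + \<gamma> / (1 - \<gamma>) = 1 / (1 - \<gamma>)" using assms by (simp add: field_simps)
  ultimately have "1 / (1 - \<gamma>) \<le> exp (\<gamma> / (1 - \<gamma>))" by simp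
  then have "inverse (exp (\<gamma> / (1 - \<gamma>))) \<le> inverse (1 / (1 - \<gamma>))"
    using assms by (intro le_imp_inverse_le) auto
  then show ?thesis using assms by (simp add: exp_minus)
qed

lemma pow_exp_bound:
  fixes \<gamma> :: real assumes "0 \<le> \<gamma>" "\<gamma> < 1"
  shows "exp (- (real j * \<gamma> / (1 - \<gamma>))) \<le> (1 - \<gamma>) ^ j"
proof -
  have "exp (- (real j * \<gamma> / (1 - \<gamma>))) = exp (real j * (- (\<gamma> / (1 - \<gamma>))))" by simp
  also have "\<dots> = exp (- (\<gamma> / (1 - \<gamma>))) ^ j" by (rule exp_of_nat_mult)
  also have "\<dots> \<le> (1 - \<gamma>) ^ j" by (rule power_mono[OF exp_bound_1g[OF assms]]) simp
  finally show ?thesis .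
qed

lemma powexp:
  fixes \<gamma> :: real assumes "0 \<le> \<gamma>" "\<gamma> < 1" "real k * \<gamma> \<le> 1"
  shows "exp (- (real k * \<gamma>)) \<le> (1 - \<gamma>) ^ (k - 1)"
proof (cases k)
  case 0 then show ?thesis by simp
next
  case (Suc j)
  have "real j * \<gamma> \<le> real k * \<gamma> * (1 - \<gamma>)"
  proof -
    have "real k * \<gamma> * \<gamma> \<le> 1 * \<gamma>" using assms by (intro mult_right_mono) auto
    then show ?thesis using Suc by (simp add: algebra_simps)
  qed
  then have "real j * \<gamma> / (1 - \<gamma>) \<le> real k * \<gamma>" using assms by (simp add: pos_divide_le_eq)
  then have "exp (- (real k * \<gamma>)) \<le> exp (- (real j * \<gamma> / (1 - \<gamma>)))" by simp
  also have "\<dots> \<le> (1 - \<gamma>) ^ j" by (rule pow_exp_bound[OF assms(1,2)])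
  finally show ?thesis using Suc by simp
qed

lemma final_ineq:
  fixes \<gamma> \<delta> :: real
  assumes g0: "0 < \<gamma>" and g1: "\<gamma> \<le> 1/2" and m: "m \<ge> 1" and d: "\<delta> = 1 - real m * \<gamma>"
    and d0: "0 < \<delta>" and dg: "\<delta> \<le> \<gamma>"
  shows "exp (-1) * (1 - 2 * \<gamma>\<^sup>2) \<le> (1 - \<delta>) * (real m * \<gamma> * (1 - \<gamma>) ^ (m - 1)) + \<delta> * (1 - \<gamma>) ^ m"
proof -
  define P where "P = (1 - \<gamma>) ^ (m - 1)"
  have g1': "\<gamma> < 1" using g1 by simp
  have "exp (- (real (m - 1) * \<gamma> / (1 - \<gamma>))) \<le> P"
    unfolding P_def by (rule pow_exp_bound) (use g0 g1' in auto)
  moreover have "real (m - 1) * \<gamma> = 1 - \<delta> - \<gamma>" using m d by (simp add: of_nat_diff algebra_simps)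
  ultimately have P1: "exp (- ((1 - \<delta> - \<gamma>) / (1 - \<gamma>))) \<le> P" by simp
  have "- ((1 - \<delta> - \<gamma>) / (1 - \<gamma>)) = -1 + \<delta> / (1 - \<gamma>)" using g1' by (simp add: field_simps)
  moreover have "\<delta> \<le> \<delta> / (1 - \<gamma>)" using d0 g0 g1' by (simp add: le_divide_eq mult_left_le_one_le)
  ultimately have "-1 + \<delta> \<le> - ((1 - \<delta> - \<gamma>) / (1 - \<gamma>))" by linarith
  then have "exp (-1 + \<delta>) \<le> exp (- ((1 - \<delta> - \<gamma>) / (1 - \<gamma>)))" by (rule exp_mono)
  then have "exp (-1 + \<delta>) \<le> P" using P1 by linarith
  moreover have "exp (-1) * (1 + \<delta>) \<le> exp (-1 + \<delta>)"
  proof -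
    have "exp (-1 + \<delta>) = exp (-1) * exp \<delta>" by (simp only: exp_add)
    moreover have "exp (-1) * (1 + \<delta>) \<le> exp (-1) * exp \<delta>"
      by (rule mult_left_mono) (simp_all add: add.commute)
    ultimately show ?thesis by simp
  qed
  ultimately have P2: "exp (-1) * (1 + \<delta>) \<le> P" by linarith
  define R where "R = (1 - \<delta>) * (1 - \<delta>) + \<delta> * (1 - \<gamma>)"
  have R0: "R \<ge> 0" unfolding R_def using d0 dg g1 by simp
  have pm: "(1 - \<gamma>) ^ m = (1 - \<gamma>) * P" unfolding P_def using m by (simp add: power_eq_if)
  have tau: "real m * \<gamma> = 1 - \<delta>" using d by simp
  have RHS: "(1 - \<delta>) * (real m * \<gamma> * (1 - \<gamma>) ^ (m - 1)) + \<delta> * (1 - \<gamma>) ^ m = P * R"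
    unfolding pm tau R_def P_def by (simp add: algebra_simps)
  have F1: "exp (-1) * (1 + \<delta>) * R \<le> P * R" using P2 R0 by (simp add: mult_right_mono)
  have F2: "1 - 2 * \<gamma>\<^sup>2 \<le> (1 + \<delta>) * R"
  proof -
    have a: "\<delta> * \<gamma> \<le> \<gamma> * \<gamma>" using dg g0 by (simp add: mult_right_mono)
    have "\<delta> * \<delta> \<le> \<gamma> * 1" using dg d0 g0 g1 by (intro mult_mono) auto
    then have b: "\<delta> * \<delta> * \<gamma> \<le> \<gamma> * \<gamma>" using g0 by (simp add: mult_right_mono)
    have c: "\<delta> * \<delta> * \<delta> \<ge> 0" using d0 by simp
    have "(1 + \<delta>) * R = 1 - \<delta> * \<gamma> + \<delta> * \<delta> * \<delta> - \<delta> * \<delta> * \<gamma>" unfolding R_def by (simp add: algebra_simps)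
    then show ?thesis using a b c by (simp add: power2_eq_square)
  qed
  have "exp (-1) * (1 - 2 * \<gamma>\<^sup>2) \<le> exp (-1) * ((1 + \<delta>) * R)" using F2 by (simp add: mult_left_mono)
  also have "\<dots> \<le> P * R" using F1 by (simp add: mult.assoc)
  finally show ?thesis unfolding RHS .
qed



lemma ip_comm: "inner_n n a b = inner_n n b a"
  unfolding inner_n_def by (simp add: mult.commute)

lemma main_bound:
  assumes uR: "u \<in> Rn n" and upos: "\<forall>i<n. u i > 0"
    and hg: "has_gradient_on n f g (box0 u)" and fnn: "\<forall>y\<in>box0 u. f y \<ge> 0"
    and dr: "dr_submodular_on n f (box0 u)"
    and lip: "\<forall>y\<in>box0 u. \<forall>z\<in>box0 u. norm_n n (vsub (g y) (g z)) \<le> L * norm_n n (vsub y z)"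
    and Pne: "P \<noteq> {}" and dc: "down_closed P" and PB: "P \<subseteq> box0 u" and Dd: "D = diam_n n P"
    and xsP: "xs \<in> P" and g0: "0 < \<gamma>" and g1: "\<gamma> \<le> 1"
    and run: "nmfw_run n g P u \<gamma> K x t v" and k: "k \<in> {1..K}"
  shows "f (x k) \<ge> t k * exp (- t k) * f xs - L * D\<^sup>2 / 2 * real k * \<gamma>\<^sup>2 - 4 * \<gamma>\<^sup>2 * f xs"
proof -
  have x0: "x 0 = (\<lambda>_. 0)" and t0: "t 0 = 0" and tK: "\<not> t K < 1"
    and step: "\<forall>j<K. t j < 1 \<and>
        v j \<in> P \<and> v j \<le> vsub u (x j) \<and>
        (\<forall>w\<in>P. w \<le> vsub u (x j) \<longrightarrow> inner_n n w (g (x j)) \<le> inner_n n (v j) (g (x j))) \<and>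
        x (Suc j) = vadd (x j) (vscale (min \<gamma> (1 - t j)) (v j)) \<and>
        t (Suc j) = t j + min \<gamma> (1 - t j)"
    using run unfolding nmfw_run_def by auto
  define s where "s j = min \<gamma> (1 - t j)" for j
  have uge: "0 \<le> u i" for i
  proof (cases "i < n")
    case True then show ?thesis using upos by (simp add: less_imp_le)
  next
    case False then show ?thesis using uR unfolding Rn_def by simp
  qed
  have tlt: "t j < 1" if "j < K" for j using step that by blast
  have vP: "v j \<in> P" if "j < K" for j using step that by blast
  have vle: "v j \<le> vsub u (x j)" if "j < K" for j using step that by blast
  have vmax: "\<forall>w\<in>P. w \<le> vsub u (x j) \<longrightarrow> inner_n n w (g (x j)) \<le> inner_n n (v j) (g (x j))"
    if "j < K" for j using step that by blast
  have xS: "x (Suc j) = (\<lambda>i. x j i + s j * v j i)" if "j < K" for j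
    using step that unfolding s_def vadd_def vscale_def by auto
  have tS: "t (Suc j) = t j + s j" if "j < K" for j using step that unfolding s_def by auto
  have Kpos: "K \<ge> 1" using tK t0 by (cases K) auto
  have tj: "t j = real j * \<gamma>" if "j < K" for j
    using that
  proof (induction j)
    case 0 then show ?case using t0 by simp
  next
    case (Suc j)
    have jK: "j < K" using Suc.prems by simp
    have "t (Suc j) < 1" using tlt Suc.prems by blast
    then have "s j = \<gamma>" using tS[OF jK] unfolding s_def by (auto simp: min_def split: if_splits)
    then show ?case using tS[OF jK] Suc.IH[OF jK] by (simp add: algebra_simps)
  qed
  have s_pos: "0 < s j" "s j \<le> \<gamma>" "s j \<le> 1 - t j" if "j < K" for j
    using tlt[OF that] g0 unfolding s_def by auto
  obtain m where Km: "K = Suc m" using Kpos by (cases K) auto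
  have tKv: "t K = 1" using tS[of m] Km s_pos[of m] tK by auto
  have xB: "x j \<in> box0 u \<and> (\<forall>i. (1 - \<gamma>) ^ j * u i \<le> u i - x j i)" if "j \<le> K" for j
    using that
  proof (induction j)
    case 0 then show ?case using x0 uge unfolding box_iff by simp
  next
    case (Suc j)
    have jK: "j < K" using Suc.prems by simp
    have IH: "x j \<in> box0 u" "\<And>i. (1 - \<gamma>) ^ j * u i \<le> u i - x j i" using Suc.IH jK by auto
    have vB: "v j \<in> box0 u" using vP[OF jK] PB by auto
    have sp: "0 < s j" "s j \<le> \<gamma>" using s_pos[OF jK] by auto
    have bnd: "0 \<le> x (Suc j) i \<and> (1 - \<gamma>) ^ Suc j * u i \<le> u i - x (Suc j) i" for i
    proof -
      have xi: "0 \<le> x j i" using IH(1) box_iff by auto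
      have vi: "0 \<le> v j i" using vB box_iff by auto
      have vu: "v j i \<le> u i - x j i" using vle[OF jK] unfolding le_fun_def vsub_def by auto
      have "s j * v j i \<le> s j * (u i - x j i)" using vu sp by (simp add: mult_left_mono)
      moreover have "(1 - \<gamma>) * (u i - x j i) \<le> (1 - s j) * (u i - x j i)"
        using sp vu vi by (intro mult_right_mono) auto
      moreover have "(1 - \<gamma>) * ((1 - \<gamma>) ^ j * u i) \<le> (1 - \<gamma>) * (u i - x j i)"
        using IH(2)[of i] g1 by (intro mult_left_mono) auto
      moreover have "0 \<le> s j * v j i" using sp vi by simp
      ultimately show ?thesis using xS[OF jK] xi by (simp add: algebra_simps)
    qed
    have "(1 - \<gamma>) ^ Suc j * u i \<ge> 0" for i using g1 uge by simp
    then show ?case using bnd unfolding box_iff by (meson diff_ge_0_iff_ge order_trans)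
  qed
  have xkB: "x j \<in> box0 u" if "j \<le> K" for j using xB[OF that] by blast
  have F0: "f xs \<ge> 0" using fnn xsP PB by auto
  define F where "F = f xs"
  define Sset where "Sset = {norm_n n (vsub a b) | a b. a \<in> P \<and> b \<in> P}"
  have DS: "D = Sup Sset" unfolding Dd diam_n_def Sset_def ..
  have bdd: "bdd_above Sset"
  proof (rule bdd_aboveI)
    fix r assume "r \<in> Sset"
    then obtain a b where ab: "a \<in> P" "b \<in> P" "r = norm_n n (vsub a b)" unfolding Sset_def by auto
    have aB: "a \<in> box0 u" and bB: "b \<in> box0 u" using ab PB by auto
    have "(vsub a b i)\<^sup>2 \<le> (u i)\<^sup>2" for i
    proof -
      have "\<bar>vsub a b i\<bar> \<le> \<bar>u i\<bar>" using aB bB uge unfolding box_iff vsub_def by (simp add: abs_le_iff) (smt (verit))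
      then show ?thesis by (simp add: abs_le_square_iff)
    qed
    then have "(\<Sum>i<n. (vsub a b i)\<^sup>2) \<le> (\<Sum>i<n. (u i)\<^sup>2)" by (intro sum_mono)
    then show "r \<le> sqrt (\<Sum>i<n. (u i)\<^sup>2)" using ab unfolding norm_n_def by simp
  qed
  obtain p0 where p0: "p0 \<in> P" using Pne by auto
  have zP: "(\<lambda>_. 0) \<in> P" using dc p0 PB unfolding down_closed_def box_iff
    by (metis (no_types, lifting) box_iff le_fun_def order_refl subsetD)
  have vsz: "vsub w (\<lambda>_. 0) = w" for w unfolding vsub_def by simp
  have nmD: "norm_n n w \<le> D" if "w \<in> P" for w
  proof -
    have "norm_n n w \<in> Sset" unfolding Sset_def using that zP vsz by (metis (mono_tags, lifting) mem_Collect_eq)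
    then show ?thesis unfolding DS using bdd by (rule cSup_upper)
  qed
  have Lneg: "D = 0 \<and> (\<forall>w\<in>P. norm_n n w = 0)" if L0: "L < 0"
  proof -
    have z: "norm_n n (vsub a b) = 0" if "a \<in> P" "b \<in> P" for a b
    proof -
      have "a \<in> box0 u" "b \<in> box0 u" using that PB by auto
      then have "norm_n n (vsub (g a) (g b)) \<le> L * norm_n n (vsub a b)" using lip by blast
      moreover have "0 \<le> norm_n n (vsub (g a) (g b))" "0 \<le> norm_n n (vsub a b)" by (simp_all add: nm_nonneg)
      ultimately show ?thesis using L0 by (smt (verit) mult_neg_pos)
    qed
    have "Sset = {0}"
    proof
      show "Sset \<subseteq> {0}" unfolding Sset_def using z by auto
      show "{0} \<subseteq> Sset" unfolding Sset_def using z p0 by auto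
    qed
    then show ?thesis using DS z zP vsz by (metis cSup_singleton)
  qed
  have LD: "L * D\<^sup>2 \<ge> 0 \<and> (\<forall>w\<in>P. L * (norm_n n w)\<^sup>2 \<le> L * D\<^sup>2)"
  proof (cases "L < 0")
    case True then show ?thesis using Lneg by simp
  next
    case False
    have "(norm_n n w)\<^sup>2 \<le> D\<^sup>2" if "w \<in> P" for w
      using nmD[OF that] nm_nonneg[of n w] by (simp add: power_mono)
    then show ?thesis using False by (simp add: mult_left_mono)
  qed
  have SI: "f (x (Suc j)) \<ge> (1 - s j) * f (x j) + s j * ((1 - \<gamma>) ^ j * F) - (s j)\<^sup>2 * (L * D\<^sup>2) / 2"
    if jK: "j < K" for j
  proof -
    define y where "y = x j"
    define vv where "vv = v j"
    define sj where "sj = s j"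
    have yB: "y \<in> box0 u" unfolding y_def using xkB jK by simp
    have sp: "0 < sj" "sj \<le> \<gamma>" using s_pos[OF jK] unfolding sj_def by auto
    have vvP: "vv \<in> P" unfolding vv_def using vP[OF jK] .
    have vvB: "vv \<in> box0 u" using vvP PB by auto
    define d where "d = (\<lambda>i. sj * vv i)"
    have d0: "\<forall>i. 0 \<le> d i" unfolding d_def using sp vvB box_iff by auto
    have xs1: "x (Suc j) = (\<lambda>i. y i + d i)" unfolding y_def d_def sj_def vv_def using xS[OF jK] .
    have ydB: "(\<lambda>i. y i + d i) \<in> box0 u" using xkB[of "Suc j"] jK xs1 by simp
    have desc: "f (\<lambda>i. y i + d i) \<ge> f y + inner_n n (g y) d - L * (norm_n n d)\<^sup>2 / 2"
      by (rule descent[OF hg dr lip upos fnn yB ydB d0])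
    have nd: "norm_n n d = sj * norm_n n vv" unfolding d_def nm_scale using sp by simp
    have id: "inner_n n (g y) d = sj * inner_n n (g y) vv" unfolding d_def ip_scale ..
    define w where "w = (\<lambda>i. max (xs i) (y i) - y i)"
    have xsB: "xs \<in> box0 u" using xsP PB by auto
    have wle: "0 \<le> w i \<and> w i \<le> xs i" for i
      using yB xsB unfolding w_def box_iff by (auto simp: max_def)
    have wP: "w \<in> P" using dc xsP wle unfolding down_closed_def le_fun_def by blast
    have wu: "w \<le> vsub u y" using yB xsB unfolding w_def le_fun_def vsub_def box_iff
      by (auto simp: max_def)
    have ipw: "inner_n n (g y) w \<le> inner_n n (g y) vv"
      using vmax[OF jK] wP wu unfolding y_def vv_def by (simp add: ip_comm)
    have yw: "(\<lambda>i. y i + w i) = (\<lambda>i. max (xs i) (y i))" unfolding w_def by auto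
    have ywB: "(\<lambda>i. y i + w i) \<in> box0 u" unfolding yw using yB xsB unfolding box_iff
      by (simp add: le_max_iff_disj)
    have w0: "\<forall>i. 0 \<le> w i" using wle by auto
    have gu: "f (\<lambda>i. y i + w i) - f y \<le> inner_n n (g y) w"
      by (rule grad_upper[OF hg dr lip upos fnn yB ywB w0])
    define c where "c = (1 - \<gamma>) ^ j"
    have c01: "0 \<le> c" "c \<le> 1" unfolding c_def using g0 g1 by (auto simp: power_le_one)
    have yc: "\<forall>i. y i \<le> (1 - c) * u i"
      using xB[of j] jK unfolding y_def c_def by (auto simp: algebra_simps)
    have ch: "c * F \<le> f (\<lambda>i. max (xs i) (y i))"
      unfolding F_def by (rule chord[OF hg dr lip upos fnn xsB yB c01 yc])
    have key: "c * F - f y \<le> inner_n n (g y) vv" using ch gu ipw yw by simp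
    have "sj * (c * F - f y) \<le> sj * inner_n n (g y) vv" using key sp by (simp add: mult_left_mono)
    moreover have "L * (norm_n n d)\<^sup>2 = sj\<^sup>2 * (L * (norm_n n vv)\<^sup>2)" unfolding nd by (simp add: power_mult_distrib)
    moreover have "sj\<^sup>2 * (L * (norm_n n vv)\<^sup>2) \<le> sj\<^sup>2 * (L * D\<^sup>2)"
      using LD vvP by (simp add: mult_left_mono)
    moreover have "sj * (c * F - f y) = sj * (c * F) - sj * f y" by (simp add: algebra_simps)
    moreover have "(1 - sj) * f y = f y - sj * f y" by (simp add: algebra_simps)
    moreover have "f (x (Suc j)) = f (\<lambda>i. y i + d i)" using xs1 by simp
    ultimately show ?thesis using desc id unfolding y_def sj_def c_def by linarith
  qed
  have fx0: "f (x j) \<ge> 0" if "j \<le> K" for j using fnn xkB[OF that] by simp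
  have tk01: "0 \<le> t k \<and> t k \<le> 1"
  proof (cases "k < K")
    case True then show ?thesis using tj[OF True] tlt[OF True] g0 by simp
  next
    case False then have "k = K" using k by simp
    then show ?thesis using tKv by simp
  qed
  have kK: "k \<le> K" using k by simp
  show ?thesis
  proof (cases "\<gamma> > 1/2")
    case True
    have "t k * exp (- t k) \<le> 1 * 1" using tk01 by (intro mult_mono) auto
    then have A: "t k * exp (- t k) * F \<le> F" using F0 mult_right_mono[of "t k * exp (- t k)" 1 F] unfolding F_def by simp
    have "1 \<le> 4 * \<gamma>\<^sup>2"
    proof -
      have "(1/2)\<^sup>2 \<le> \<gamma>\<^sup>2" using True by (intro power_mono) auto
      then show ?thesis by (simp add: power2_eq_square)
    qed
    then have B: "F \<le> 4 * \<gamma>\<^sup>2 * F" using F0 unfolding F_def by (simp add: mult_le_cancel_right1)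
    have C: "0 \<le> L * D\<^sup>2 / 2 * real k * \<gamma>\<^sup>2" using LD by simp
    show ?thesis using A B C fx0[OF kK] unfolding F_def by linarith
  next
    case False
    then have gh: "\<gamma> \<le> 1/2" by simp
    define E where "E = L * D\<^sup>2 * \<gamma>\<^sup>2 / 2"
    have E0: "E \<ge> 0" unfolding E_def using LD by simp
    have SI2: "f (x (Suc j)) \<ge> (1 - s j) * f (x j) + s j * ((1 - \<gamma>) ^ j * F) - E" if jK: "j < K" for j
    proof -
      have "(s j)\<^sup>2 \<le> \<gamma>\<^sup>2" using s_pos[OF jK] by (intro power_mono) auto
      then have "(s j)\<^sup>2 * (L * D\<^sup>2) \<le> \<gamma>\<^sup>2 * (L * D\<^sup>2)" using LD
        by (intro mult_right_mono) auto
      then have "(s j)\<^sup>2 * (L * D\<^sup>2) / 2 \<le> E" unfolding E_def by (simp add: mult.commute)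
      then show ?thesis using SI[OF jK] by linarith
    qed
    have I2: "f (x j) \<ge> real j * \<gamma> * (1 - \<gamma>) ^ (j - 1) * F - real j * E" if "j < K" for j
      using that
    proof (induction j)
      case 0 then show ?case using fx0[of 0] by simp
    next
      case (Suc j)
      have jK: "j < K" using Suc.prems by simp
      have sj: "s j = \<gamma>" using tS[OF jK] tj[OF jK] tj[OF Suc.prems] by (simp add: algebra_simps)
      have IH: "f (x j) \<ge> real j * \<gamma> * (1 - \<gamma>) ^ (j - 1) * F - real j * E" using Suc.IH jK by simp
      have g1': "0 \<le> 1 - \<gamma>" using g1 by simp
      have "(1 - \<gamma>) * (real j * \<gamma> * (1 - \<gamma>) ^ (j - 1) * F - real j * E) \<le> (1 - \<gamma>) * f (x j)"
        using IH g1' by (rule mult_left_mono)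
      moreover have "(1 - \<gamma>) * (real j * \<gamma> * (1 - \<gamma>) ^ (j - 1) * F) = real j * (\<gamma> * ((1 - \<gamma>) ^ j * F))"
        by (cases j) (simp_all add: algebra_simps)
      moreover have "(1 - \<gamma>) * (real j * E) \<le> real j * E"
        using E0 g0 g1 mult_left_le_one_le[of "real j * E" "1 - \<gamma>"] by simp
      moreover have "(1 - \<gamma>) * (real j * \<gamma> * (1 - \<gamma>) ^ (j - 1) * F - real j * E)
          = (1 - \<gamma>) * (real j * \<gamma> * (1 - \<gamma>) ^ (j - 1) * F) - (1 - \<gamma>) * (real j * E)"
        by (simp add: algebra_simps)
      moreover have "real (Suc j) * \<gamma> * (1 - \<gamma>) ^ (Suc j - 1) * F - real (Suc j) * E
          = real j * (\<gamma> * ((1 - \<gamma>) ^ j * F)) + \<gamma> * ((1 - \<gamma>) ^ j * F) - real j * E - E"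
        by (simp add: algebra_simps)
      moreover have "(1 - \<gamma>) * f (x j) + \<gamma> * ((1 - \<gamma>) ^ j * F) - E \<le> f (x (Suc j))"
        using SI2[OF jK] sj by simp
      ultimately show ?case by linarith
    qed
    have kE: "real k * E = L * D\<^sup>2 / 2 * real k * \<gamma>\<^sup>2" unfolding E_def by simp
    have G4: "0 \<le> 4 * \<gamma>\<^sup>2 * F" using F0 unfolding F_def by simp
    show ?thesis
    proof (cases "k < K")
      case True
      have tk: "t k = real k * \<gamma>" using tj[OF True] .
      have "exp (- (real k * \<gamma>)) \<le> (1 - \<gamma>) ^ (k - 1)"
        by (rule powexp) (use g0 gh tk tk01 in auto)
      then have "real k * \<gamma> * exp (- (real k * \<gamma>)) * F \<le> real k * \<gamma> * (1 - \<gamma>) ^ (k - 1) * F"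
        using g0 F0 unfolding F_def by (intro mult_right_mono mult_left_mono) auto
      then show ?thesis unfolding tk using I2[OF True] kE G4 unfolding F_def by linarith
    next
      case False
      then have kK': "k = K" using k by simp
      have m1: "m \<ge> 1"
      proof (rule ccontr)
        assume "\<not> m \<ge> 1" then have "m = 0" by simp
        then have "t K = \<gamma>" using tS[of 0] Km t0 s_def g1 by (simp add: min_def)
        then show False using tKv gh by simp
      qed
      have mK: "m < K" using Km by simp
      define \<delta> where "\<delta> = s m"
      have tm: "t m = real m * \<gamma>" using tj[OF mK] .
      have dd: "\<delta> = 1 - real m * \<gamma>" using tS[OF mK] tKv Km tm unfolding \<delta>_def by simp
      have d0: "0 < \<delta>" "\<delta> \<le> \<gamma>" using s_pos[OF mK] unfolding \<delta>_def by auto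
      have fi: "exp (-1) * (1 - 2 * \<gamma>\<^sup>2) \<le> (1 - \<delta>) * (real m * \<gamma> * (1 - \<gamma>) ^ (m - 1)) + \<delta> * (1 - \<gamma>) ^ m"
        by (rule final_ineq[OF g0 gh m1 dd d0])
      have IHm: "f (x m) \<ge> real m * \<gamma> * (1 - \<gamma>) ^ (m - 1) * F - real m * E" using I2[OF mK] .
      have d1: "0 \<le> 1 - \<delta>" using d0 g1 by simp
      define A where "A = (1 - \<delta>) * (real m * \<gamma> * (1 - \<gamma>) ^ (m - 1))"
      define Z where "Z = \<delta> * ((1 - \<gamma>) ^ m * F)"
      define W where "W = (1 - \<delta>) * (real m * E)"
      define X where "X = (1 - \<delta>) * f (x m)"
      have h0: "(1 - \<delta>) * (real m * \<gamma> * (1 - \<gamma>) ^ (m - 1) * F - real m * E) \<le> X"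
        unfolding X_def using IHm d1 by (rule mult_left_mono)
      have h1: "A * F - W \<le> X" using h0 unfolding A_def W_def by (simp add: algebra_simps)
      have h3: "W \<le> real m * E" unfolding W_def
        using E0 d0 d1 mult_left_le_one_le[of "real m * E" "1 - \<delta>"] by simp
      have h4: "exp (-1) * (1 - 2 * \<gamma>\<^sup>2) * F \<le> A * F + Z"
      proof -
        have "exp (-1) * (1 - 2 * \<gamma>\<^sup>2) * F \<le> (A + \<delta> * (1 - \<gamma>) ^ m) * F"
          using fi F0 unfolding F_def A_def by (rule mult_right_mono)
        then show ?thesis unfolding Z_def by (simp add: algebra_simps)
      qed
      have h6: "exp (-1) * (1 - 2 * \<gamma>\<^sup>2) * F = exp (-1) * F - 2 * exp (-1) * (\<gamma>\<^sup>2 * F)"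
        by (simp add: algebra_simps)
      have h7: "2 * exp (-1) * (\<gamma>\<^sup>2 * F) \<le> 4 * (\<gamma>\<^sup>2 * F)"
      proof -
        have "exp (-1::real) \<le> 1" by simp
        then have "2 * exp (-1) \<le> (4::real)" by linarith
        moreover have "0 \<le> \<gamma>\<^sup>2 * F" using F0 unfolding F_def by simp
        ultimately show ?thesis by (rule mult_right_mono)
      qed
      have hK: "real K * E = real m * E + E" using Km by (simp add: algebra_simps)
      have S: "X + Z - E \<le> f (x K)"
        using SI2[OF mK] Km unfolding \<delta>_def X_def Z_def by simp
      have fin: "exp (-1) * F - real K * E - 4 * (\<gamma>\<^sup>2 * F) \<le> f (x K)"
        using h1 h3 h4 h6 h7 hK S by linarith
      have e1: "t k * exp (- t k) * f xs = exp (-1) * F" using kK' tKv unfolding F_def by simp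
      have e2: "4 * \<gamma>\<^sup>2 * f xs = 4 * (\<gamma>\<^sup>2 * F)" unfolding F_def by simp
      show ?thesis unfolding e1 e2 using fin kE unfolding kK' by linarith
    qed
  qed
qed

theorem theorem2:
  "\<exists>C::real. C \<ge> 0 \<and>
    (\<forall>(n::nat) (u::nat \<Rightarrow> real) (f::(nat \<Rightarrow> real) \<Rightarrow> real) (g::(nat \<Rightarrow> real) \<Rightarrow> (nat \<Rightarrow> real))
       (L::real) (P::(nat \<Rightarrow> real) set) (D::real) (xs::nat \<Rightarrow> real) (\<gamma>::real) (K::nat)
       (x::nat \<Rightarrow> nat \<Rightarrow> real) (t::nat \<Rightarrow> real) (v::nat \<Rightarrow> nat \<Rightarrow> real).
      u \<in> Rn n \<and> (\<forall>i<n. u i > 0) \<and>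
      has_gradient_on n f g (box0 u) \<and>
      (\<forall>y\<in>box0 u. f y \<ge> 0) \<and>
      dr_submodular_on n f (box0 u) \<and>
      (\<forall>y\<in>box0 u. \<forall>z\<in>box0 u. norm_n n (vsub (g y) (g z)) \<le> L * norm_n n (vsub y z)) \<and>
      P \<noteq> {} \<and> compact P \<and> convex_n P \<and> down_closed P \<and> P \<subseteq> box0 u \<and>
      D = diam_n n P \<and>
      xs \<in> P \<and> (\<forall>y\<in>P. f y \<le> f xs) \<and>
      0 < \<gamma> \<and> \<gamma> \<le> 1 \<and>
      nmfw_run n g P u \<gamma> K x t v
      \<longrightarrow> (\<forall>k\<in>{1..K}.
            f (x k) \<ge> t k * exp (- t k) * f xs - L * D\<^sup>2 / 2 * real k * \<gamma>\<^sup>2 - C * \<gamma>\<^sup>2 * f xs))"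
proof (intro exI[of _ "4::real"] conjI allI impI ballI)
  show "(0::real) \<le> 4" by simp
next
  fix n u f g L P D xs \<gamma> K x t v k
  assume H: "u \<in> Rn n \<and> (\<forall>i<n. u i > 0) \<and>
      has_gradient_on n f g (box0 u) \<and>
      (\<forall>y\<in>box0 u. f y \<ge> 0) \<and>
      dr_submodular_on n f (box0 u) \<and>
      (\<forall>y\<in>box0 u. \<forall>z\<in>box0 u. norm_n n (vsub (g y) (g z)) \<le> L * norm_n n (vsub y z)) \<and>
      P \<noteq> {} \<and> compact P \<and> convex_n P \<and> down_closed P \<and> P \<subseteq> box0 u \<and>
      D = diam_n n P \<and>
      xs \<in> P \<and> (\<forall>y\<in>P. f y \<le> f xs) \<and>
      0 < \<gamma> \<and> \<gamma> \<le> 1 \<and>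
      nmfw_run n g P u \<gamma> K x t v" and k: "k \<in> {1..K}"
  show "f (x k) \<ge> t k * exp (- t k) * f xs - L * D\<^sup>2 / 2 * real k * \<gamma>\<^sup>2 - 4 * \<gamma>\<^sup>2 * f xs"
    using H k by (intro main_bound) auto
qed

end
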